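(* Let $K,L,T,r$ be positive integers with $L\le K$ and $1\le r\le \min\{K,T\}$, and let $(\alpha,\beta)$ be the $\mathsf{GASP}_r$ exponent vectors (defined in the context). Then the number of distinct integers in the sumset $\operatorname{Set}(\alpha)+\operatorname{Set}(\beta)$ is \begin{multline*} N= KL+2K+3T-2 -\max\{K,\varphi\}+(L-2)\max\{0,\min\{r,r-\varphi\}\}+ \lfloor (T-1)/r \rfloor \min\{T-1,K-r\} \\ -\mathbf{1}_{\varphi < r}\Bigg(\min\{0,\mu-r\} +r(T-1-\mu)/K+\frac{-Kx^2 + (-K-2\max\{0,\varphi\}+2T-2)x+T-1-\mu}{2} -\frac{T-1-\mu}{K} \cdot \frac{T-1+\mu}{2}\Bigg), \end{multline*} where $\varphi = T-1-KL+2K$, $\mu$ is the integer with $0 \le \mu \le K-1$ and $\mu \equiv T-1 \pmod{K}$, and $x = \min\left\{ \frac{T-1-\mu}{K} -\mathbf{1}_{\mu=0}, L-3 \right\}$.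
   Context: For positive integers $K,L,T,r$ with $L\le K$ and $1\le r\le\min\{K,T\}$, the code $\mathsf{GASP}_r$ is given by the integer vectors $\alpha=(\alpha_{\mathrm p}\mid\alpha_{\mathrm s})$ and $\beta=(\beta_{\mathrm p}\mid\beta_{\mathrm s})$ (concatenations), where $\alpha_{\mathrm p}=(0,1,\ldots,K-1)$; $\alpha_{\mathrm s}$ is the vector of the $T$ smallest elements of the set $\{KL+j+Kt : 0\le j\le r-1,\ t\in\mathbb{Z}_{\ge 0}\}$ listed in increasing order, i.e. $(KL,KL+1,\ldots,KL+r-1,KL+K,\ldots,KL+K+r-1,\ldots)$ of length $T$; $\beta_{\mathrm p}=(0,K,2K,\ldots,K(L-1))$; $\beta_{\mathrm s}=(KL,KL+1,\ldots,KL+T-1)$. $\operatorname{Set}(v)$ denotes the set of entries of a vector $v$, and $A+B=\{a+b: a\in A,b\in B\}$. $\mathbf{1}_P$ is $1$ if $P$ holds and $0$ otherwise. *)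

theory Defs
  imports Main "HOL.Rat"
begin

definition sumset :: "nat set \<Rightarrow> nat set \<Rightarrow> nat set" where
  "sumset A B = {a + b | a b. a \<in> A \<and> b \<in> B}"

definition gasp_S :: "nat \<Rightarrow> nat \<Rightarrow> nat \<Rightarrow> nat set" where
  "gasp_S K L r = {K * L + j + K * t | j t. j < r}"

text \<open>Set(alpha_s): the T smallest elements of gasp_S.\<close>
definition gasp_alpha_s :: "nat \<Rightarrow> nat \<Rightarrow> nat \<Rightarrow> nat \<Rightarrow> nat set" where
  "gasp_alpha_s K L T r =
     {a \<in> gasp_S K L r. card {b \<in> gasp_S K L r. b < a} < T}"

definition gasp_alpha :: "nat \<Rightarrow> nat \<Rightarrow> nat \<Rightarrow> nat \<Rightarrow> nat set" where
  "gasp_alpha K L T r = {0..<K} \<union> gasp_alpha_s K L T r"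

definition gasp_beta :: "nat \<Rightarrow> nat \<Rightarrow> nat \<Rightarrow> nat set" where
  "gasp_beta K L T = {K * i | i. i < L} \<union> {K * L ..< K * L + T}"

definition ind :: "bool \<Rightarrow> rat" where
  "ind P = (if P then 1 else 0)"

definition gasp_N :: "nat \<Rightarrow> nat \<Rightarrow> nat \<Rightarrow> nat \<Rightarrow> rat" where
  "gasp_N K' L' T' r' =
    (let K = int K'; L = int L'; T = int T'; r = int r';
         \<phi> = T - 1 - K * L + 2 * K;
         \<mu> = (T - 1) mod K;
         x = min ((T - 1 - \<mu>) div K - (if \<mu> = 0 then 1 else 0)) (L - 3)
     in of_int (K * L + 2 * K + 3 * T - 2 - max K \<phi>
                 + (L - 2) * max 0 (min r (r - \<phi>))
                 + ((T - 1) div r) * min (T - 1) (K - r))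
        - ind (\<phi> < r) *
          ( of_int (min 0 (\<mu> - r))
          + of_int (r * (T - 1 - \<mu>)) / of_int K
          + of_int (- K * x^2 + (- K - 2 * max 0 \<phi> + 2 * T - 2) * x + T - 1 - \<mu>) / 2
          - of_int (T - 1 - \<mu>) / of_int K * (of_int (T - 1 + \<mu>) / 2)))"

end

theory Submission
  imports Defs
begin


definition gg :: "nat \<Rightarrow> nat \<Rightarrow> nat \<Rightarrow> nat" where
  "gg K r i = K * (i div r) + i mod r"

lemma gg_less:
  assumes "0 < r" "r \<le> K" "i < j"
  shows "gg K r i < gg K r j"
proof (cases "i div r = j div r")
  case True
  then show ?thesis using assms div_mult_mod_eq[of i r] div_mult_mod_eq[of j r]
    unfolding gg_def by (metis add_less_cancel_left nat_add_left_cancel_less)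
next
  case False
  have "i div r \<le> j div r" using assms by (simp add: div_le_mono)
  with False have "Suc (i div r) \<le> j div r" by simp
  then have "K * Suc (i div r) \<le> K * (j div r)" by (rule mult_le_mono2)
  moreover have "i mod r < K" using assms by (meson mod_less_divisor order_less_le_trans)
  ultimately show ?thesis unfolding gg_def by simp
qed

lemma gg_smono: "0 < r \<Longrightarrow> r \<le> K \<Longrightarrow> strict_mono (\<lambda>i. K*L + gg K r i)"
  by (rule strict_monoI) (simp add: gg_less)

lemma gg_small: "c < r \<Longrightarrow> gg K r c = c"
  by (simp add: gg_def)

lemma gg_repr: "0 < r \<Longrightarrow> j < r \<Longrightarrow> gg K r (t * r + j) = j + K * t"
  by (simp add: gg_def)

lemma gasp_S_eq: assumes "0 < r" shows "gasp_S K L r = range (\<lambda>i. K*L + gg K r i)"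
proof
  show "gasp_S K L r \<subseteq> range (\<lambda>i. K*L + gg K r i)"
  proof
    fix x assume "x \<in> gasp_S K L r"
    then obtain j t where x: "x = K*L + j + K*t" "j < r" unfolding gasp_S_def by auto
    then have "x = K*L + gg K r (t*r+j)" using assms gg_repr by simp
    then show "x \<in> range (\<lambda>i. K*L + gg K r i)" by blast
  qed
next
  show "range (\<lambda>i. K*L + gg K r i) \<subseteq> gasp_S K L r"
  proof
    fix x assume "x \<in> range (\<lambda>i. K*L + gg K r i)"
    then obtain i where "x = K*L + gg K r i" by auto
    then have "x = K*L + i mod r + K*(i div r)" "i mod r < r" using assms by (auto simp: gg_def)
    then show "x \<in> gasp_S K L r" unfolding gasp_S_def by blast
  qed
qed

lemma alpha_s_eq:
  assumes "0 < r" "r \<le> K"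
  shows "gasp_alpha_s K L T r = (\<lambda>i. K*L + gg K r i) ` {..<T}"
proof -
  define h where "h = (\<lambda>i. K*L + gg K r i)"
  have sm: "strict_mono h" unfolding h_def using gg_smono assms by blast
  have S: "gasp_S K L r = range h" unfolding h_def using gasp_S_eq assms by blast
  have c: "card {b \<in> gasp_S K L r. b < h i} = i" for i
  proof -
    have "{b \<in> gasp_S K L r. b < h i} = h ` {..<i}"
      using sm by (auto simp: S strict_mono_less)
    moreover have "inj_on h {..<i}" using sm strict_mono_imp_inj_on by blast
    ultimately show ?thesis by (simp add: card_image)
  qed
  show ?thesis unfolding gasp_alpha_s_def h_def[symmetric]
    using c[unfolded S] by (auto simp: S)
qed


definition RR :: "nat \<Rightarrow> nat \<Rightarrow> nat \<Rightarrow> nat set" where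
  "RR K L r = {c + K*m | c m. c < r \<and> m < L}"

definition WW :: "nat \<Rightarrow> nat \<Rightarrow> nat \<Rightarrow> nat \<Rightarrow> nat set" where
  "WW K r T k = {gg K r j + t | j t. j < k \<and> t < T}"

lemma sumset_eq:
  assumes "0 < K" "0 < L" "0 < T" "0 < r" "r \<le> K" "r \<le> T"
  shows "sumset (gasp_alpha K L T r) (gasp_beta K L T) =
     {0..<K*L+T+K-1} \<union> (\<lambda>x. K*L + x) ` RR K L r \<union> (\<lambda>x. 2*(K*L) + x) ` WW K r T T"
    (is "?L = ?R")
proof
  show "?L \<subseteq> ?R"
  proof
    fix x assume "x \<in> ?L"
    then obtain a b where x: "x = a + b" and a: "a \<in> gasp_alpha K L T r" and b: "b \<in> gasp_beta K L T"
      unfolding sumset_def by blast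
    consider (a1) "a < K" | (a2) j where "j < T" "a = K*L + gg K r j"
      using a assms unfolding gasp_alpha_def by (auto simp: alpha_s_eq)
    then show "x \<in> ?R"
    proof cases
      case a1
      consider (b1) i where "i < L" "b = K*i" | (b2) "K*L \<le> b" "b < K*L+T"
        using b unfolding gasp_beta_def by auto
      then show ?thesis
      proof cases
        case b1
        have "K*i \<le> K*(L-1)" using b1 by (intro mult_le_mono2) simp
        moreover have "K*(L-1) + K = K*L" using assms by (cases L) auto
        ultimately have "x < K*L+T+K-1" using a1 b1 x assms by linarith
        then show ?thesis by simp
      next
        case b2
        then show ?thesis using a1 x by auto
      qed
    next
      case a2
      consider (b1) i where "i < L" "b = K*i" | (b2) t where "t < T" "b = K*L + t"
        using b unfolding gasp_beta_def by auto (metis le_add_diff_inverse add_less_cancel_left)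
      then show ?thesis
      proof cases
        case b1
        have xe: "x = K*L + (j mod r + K*(j div r + i))" using x a2 b1 by (simp add: gg_def algebra_simps)
        show ?thesis
        proof (cases "j div r + i < L")
          case True
          have "j mod r < r" using assms by simp
          then have "j mod r + K*(j div r + i) \<in> RR K L r" using True unfolding RR_def by blast
          then show ?thesis using xe by blast
        next
          case False
          define t where "t = j div r + i - L"
          define j' where "j' = t * r + j mod r"
          have t_le: "t \<le> j div r" using b1 t_def by simp
          have "j' \<le> j" unfolding j'_def using mult_le_mono1[OF t_le, of r] div_mult_mod_eq[of j r] by linarith
          then have "j' < T" using a2 by linarith
          have g': "gg K r j' = j mod r + K*t" unfolding j'_def using assms by (simp add: gg_repr)
          have "j div r + i = t + L" using False t_def by simp
          then have "K*(j div r + i) = K*t + K*L" by (simp add: add_mult_distrib2)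
          then have "x = 2*(K*L) + (gg K r j' + 0)" using xe g' by simp
          moreover have "gg K r j' + 0 \<in> WW K r T T" unfolding WW_def using \<open>j' < T\<close> assms by blast
          ultimately show ?thesis by blast
        qed
      next
        case b2
        have "x = 2*(K*L) + (gg K r j + t)" using x a2 b2 by simp
        moreover have "gg K r j + t \<in> WW K r T T" unfolding WW_def using a2 b2 by blast
        ultimately show ?thesis by blast
      qed
    qed
  qed
next
  have A1: "a \<in> gasp_alpha K L T r" if "a < K" for a using that unfolding gasp_alpha_def by simp
  have A2: "K*L + gg K r j \<in> gasp_alpha K L T r" if "j < T" for j
    using that assms unfolding gasp_alpha_def by (auto simp: alpha_s_eq)
  have B1: "K*i \<in> gasp_beta K L T" if "i < L" for i using that unfolding gasp_beta_def by auto
  have B2: "K*L + t \<in> gasp_beta K L T" if "t < T" for t using that unfolding gasp_beta_def by auto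
  have S: "a + b \<in> ?L" if "a \<in> gasp_alpha K L T r" "b \<in> gasp_beta K L T" for a b
    using that unfolding sumset_def by blast
  show "?R \<subseteq> ?L"
  proof
    fix y assume "y \<in> ?R"
    then consider (p1) "y < K*L+T+K-1" | (p2) c m where "c < r" "m < L" "y = K*L + (c + K*m)"
      | (p3) j t where "j < T" "t < T" "y = 2*(K*L) + (gg K r j + t)"
      unfolding RR_def WW_def by auto
    then show "y \<in> ?L"
    proof cases
      case p1
      show ?thesis
      proof (cases "y < K*L")
        case True
        have "y div K < L" using True assms by (simp add: div_less_iff_less_mult mult.commute)
        then have "y mod K + K*(y div K) \<in> ?L" using assms by (intro S A1 B1) auto
        then show ?thesis by simp
      next
        case False
        show ?thesis
        proof (cases "y < K*L + T")
          case True
          then have "0 + (K*L + (y - K*L)) \<in> ?L" using assms False by (intro S A1 B2) auto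
          then show ?thesis using False by simp
        next
          case False2: False
          then have "(y - (K*L + (T-1))) + (K*L + (T-1)) \<in> ?L" using assms p1 by (intro S A1 B2) auto
          then show ?thesis using False2 by simp
        qed
      qed
    next
      case p2
      have "(K*L + gg K r c) + K*m \<in> ?L" using p2 assms by (intro S A2 B1) auto
      then show ?thesis using p2 by (simp add: gg_small add.assoc)
    next
      case p3
      have "(K*L + gg K r j) + (K*L + t) \<in> ?L" using p3 by (intro S A2 B2) auto
      moreover have "K * L + gg K r j + (K * L + t) = 2 * (K * L) + (gg K r j + t)" by simp
      ultimately show ?thesis using p3 by metis
    qed
  qed
qed



lemma WW_Suc: "WW K r T (Suc k) = WW K r T k \<union> {gg K r k ..< gg K r k + T}"
  unfolding WW_def by (auto simp: less_Suc_eq) (metis add_less_cancel_left le_add_diff_inverse)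

lemma WW_sub: assumes "0 < r" "r \<le> K" shows "WW K r T (Suc m) \<subseteq> {..< gg K r m + T}"
proof
  fix x assume "x \<in> WW K r T (Suc m)"
  then obtain j t where "x = gg K r j + t" "j \<le> m" "t < T" unfolding WW_def by auto
  moreover have "gg K r j \<le> gg K r m" using gg_less[OF assms, of j m] \<open>j \<le> m\<close>
    by (cases "j = m") auto
  ultimately show "x \<in> {..< gg K r m + T}" by simp
qed

lemma WW_fin: "finite (WW K r T k)"
  by (induction k) (auto simp: WW_Suc, simp add: WW_def)

lemma WW_0: "WW K r T 0 = {}" by (simp add: WW_def)

lemma gg_Suc: assumes "0 < r" "r \<le> K"
  shows "gg K r (Suc m) = gg K r m + (if Suc (m mod r) = r then K - r + 1 else 1)"
proof (cases "Suc (m mod r) = r")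
  case True
  then have "Suc m div r = Suc (m div r)" "Suc m mod r = 0" using assms by (simp_all add: div_Suc mod_Suc)
  then show ?thesis using True assms unfolding gg_def by simp
next
  case False
  then have "Suc m div r = m div r" "Suc m mod r = Suc (m mod r)" using assms by (simp_all add: div_Suc mod_Suc)
  then show ?thesis using False unfolding gg_def by simp
qed

lemma card_WW:
  assumes "0 < r" "r \<le> K" "0 < T"
  shows "card (WW K r T (Suc m)) = T + m + (m div r) * min (T-1) (K-r)"
proof (induction m)
  case 0
  have "WW K r T (Suc 0) = {0..<T}" by (simp add: WW_Suc WW_0 gg_def)
  then show ?case by simp
next
  case (Suc m)
  let ?a = "gg K r m" and ?b = "gg K r (Suc m)"
  have ab: "?a < ?b" using gg_less assms by simp
  have sub: "WW K r T (Suc m) \<subseteq> {..< ?a + T}" using WW_sub assms by blast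
  have sup: "{?a ..< ?a + T} \<subseteq> WW K r T (Suc m)" by (simp add: WW_Suc)
  have eq: "WW K r T (Suc (Suc m)) = WW K r T (Suc m) \<union> {max ?b (?a + T) ..< ?b + T}"
    using sub sup ab by (auto simp: WW_Suc[of _ _ _ "Suc m"])
  have disj: "WW K r T (Suc m) \<inter> {max ?b (?a + T) ..< ?b + T} = {}" using sub by auto
  have "card (WW K r T (Suc (Suc m))) = card (WW K r T (Suc m)) + (?b + T - max ?b (?a + T))"
    unfolding eq by (subst card_Un_disjoint) (auto simp: WW_fin disj)
  also have "?b + T - max ?b (?a + T) = min T (?b - ?a)" by auto
  also have "\<dots> = 1 + (if Suc (m mod r) = r then min (T-1) (K-r) else 0)"
    using gg_Suc[OF assms(1,2), of m] assms by auto
  finally have c: "card (WW K r T (Suc (Suc m))) = card (WW K r T (Suc m)) + (1 + (if Suc (m mod r) = r then min (T-1) (K-r) else 0))" .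
  have d: "Suc m div r = m div r + (if Suc (m mod r) = r then 1 else 0)" using assms by (simp add: div_Suc mod_Suc)
  show ?case unfolding c d Suc.IH by (cases "Suc (m mod r) = r") (simp_all add: algebra_simps)
qed



lemma RR_Suc: "RR K (Suc L) r = RR K L r \<union> (\<lambda>c. c + K*L) ` {..<r}"
  unfolding RR_def by (auto simp: less_Suc_eq)

lemma RR_less: assumes "r \<le> K" shows "RR K L r \<subseteq> {..<K*L}"
proof
  fix x assume "x \<in> RR K L r"
  then obtain c m where x: "x = c + K*m" "c < r" "m < L" unfolding RR_def by auto
  have "K * Suc m \<le> K * L" using x by (intro mult_le_mono2) simp
  then show "x \<in> {..<K*L}" using x assms by simp
qed

lemma RR_fin: "finite (RR K L r)"
  by (induction L) (auto simp: RR_Suc, simp add: RR_def)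

lemma card_RR_ge:
  assumes "0 < r" "r \<le> K" "b < K"
  shows "card {x \<in> RR K L r. K*a + b \<le> x} = r*(L - Suc a) + (if a < L then r - min r b else 0)"
proof (induction L)
  case 0
  then show ?case by (simp add: RR_def)
next
  case (Suc L)
  let ?P = "\<lambda>x. K*a + b \<le> x"
  have eq: "{x \<in> RR K (Suc L) r. ?P x} = {x \<in> RR K L r. ?P x} \<union> (\<lambda>c. c + K*L) ` {c. c < r \<and> ?P (c + K*L)}"
    unfolding RR_Suc by auto
  have disj: "{x \<in> RR K L r. ?P x} \<inter> (\<lambda>c. c + K*L) ` {c. c < r \<and> ?P (c + K*L)} = {}"
    using RR_less[OF assms(2), of L] by auto
  have inj: "inj_on (\<lambda>c. c + K*L) {c. c < r \<and> ?P (c + K*L)}" by (auto simp: inj_on_def)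
  have new: "card {c. c < r \<and> ?P (c + K*L)} = (if a < L then r else if a = L then r - min r b else 0)"
  proof (cases "a < L")
    case True
    have "K * Suc a \<le> K * L" using True by (intro mult_le_mono2) simp
    then have "{c. c < r \<and> ?P (c + K*L)} = {..<r}" using assms by auto
    then show ?thesis using True by simp
  next
    case False
    show ?thesis
    proof (cases "a = L")
      case True
      then have "{c. c < r \<and> ?P (c + K*L)} = {b..<r}" by auto
      then show ?thesis using True by simp
    next
      case False2: False
      then have "K * Suc L \<le> K * a" using False by (intro mult_le_mono2) simp
      then have "{c. c < r \<and> ?P (c + K*L)} = {}" using assms by auto
      then show ?thesis using False False2 by simp
    qed
  qed
  have hh: "a < L \<Longrightarrow> r*(L-a) = r*(L - Suc a) + r"
    by (metis Suc_diff_Suc mult_Suc_right add.commute)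
  have "card {x \<in> RR K (Suc L) r. ?P x} = card {x \<in> RR K L r. ?P x} + card {c. c < r \<and> ?P (c + K*L)}"
    unfolding eq by (subst card_Un_disjoint) (auto simp: RR_fin disj card_image[OF inj])
  also have "\<dots> = r*(Suc L - Suc a) + (if a < Suc L then r - min r b else 0)"
    unfolding Suc.IH new using hh
    by (cases "a < L"; cases "a = L") (auto simp: Suc_diff_le mult_Suc_right)
  finally show ?case .
qed



lemma card_main:
  assumes "0 < K" "0 < L" "0 < T" "0 < r" "r \<le> K" "r \<le> T"
  shows "card (sumset (gasp_alpha K L T r) (gasp_beta K L T)) + (K*L+T+K-1 - 2*(K*L))
         = (K*L+T+K-1) + card {x \<in> RR K L r. T+K-1 \<le> x} + card (WW K r T T)"
proof -
  define n where "n = K*L"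
  define E where "E = n+T+K-1"
  define I where "I = {0..<E}"
  define X where "X = (\<lambda>x. n + x) ` RR K L r"
  define Y where "Y = (\<lambda>x. 2*n + x) ` WW K r T T"
  have U: "sumset (gasp_alpha K L T r) (gasp_beta K L T) = I \<union> X \<union> Y"
    unfolding I_def X_def Y_def E_def n_def using sumset_eq[OF assms] by simp
  have U2: "I \<union> X \<union> Y = I \<union> ((X - I) \<union> (Y - I))" by blast
  have Kn: "K \<le> n" unfolding n_def using assms by simp
  have XY: "X \<inter> Y = {}" unfolding X_def Y_def using RR_less[OF assms(5), of L] by (force simp: n_def)
  have finX: "finite X" unfolding X_def using RR_fin by simp
  have finY: "finite Y" unfolding Y_def using WW_fin by simp
  have cX: "card (X - I) = card {x \<in> RR K L r. T+K-1 \<le> x}"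
  proof -
    have "X - I = (\<lambda>x. n + x) ` {x \<in> RR K L r. T+K-1 \<le> x}"
      unfolding X_def I_def E_def using assms by auto
    then show ?thesis by (simp add: card_image)
  qed
  have YI: "Y \<inter> I = {2*n..<E}"
  proof
    show "Y \<inter> I \<subseteq> {2*n..<E}" unfolding Y_def I_def by auto
    show "{2*n..<E} \<subseteq> Y \<inter> I"
    proof
      fix y assume y: "y \<in> {2*n..<E}"
      then have "y - 2*n < T" using Kn unfolding E_def by auto
      then have "gg K r 0 + (y - 2*n) \<in> WW K r T T" unfolding WW_def using assms by blast
      then have "2*n + (gg K r 0 + (y - 2*n)) \<in> Y" unfolding Y_def by blast
      then show "y \<in> Y \<inter> I" using y unfolding I_def by (simp add: gg_def)
    qed
  qed
  have cY: "card (Y - I) + (E - 2*n) = card (WW K r T T)"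
  proof -
    have "card (Y - I) = card Y - card (Y \<inter> I)" by (rule card_Diff_subset_Int) (simp add: I_def)
    moreover have "card Y = card (WW K r T T)" unfolding Y_def by (simp add: card_image)
    moreover have "card (Y \<inter> I) \<le> card Y" using finY by (intro card_mono) auto
    ultimately show ?thesis using YI by simp
  qed
  have "card (I \<union> X \<union> Y) = card I + card (X - I) + card (Y - I)"
    unfolding U2 using XY finX finY
    by (subst card_Un_disjoint, simp add: I_def, simp, blast)
       (subst card_Un_disjoint, auto)
  then show ?thesis using U cX cY unfolding I_def E_def n_def by simp
qed



lemma N_eq:
  fixes K L T r Q \<mu> F :: nat
  assumes "0 < K" "0 < L" "0 < T" "0 < r" "r \<le> K" "r \<le> T"
    and Qd: "Q = (T-1) div K" and md: "\<mu> = (T-1) mod K" and Fd: "F = (T-1) div r"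
  shows "gasp_N K L T r = of_int (int K*int L + 3*int T + int K - 2
       + int F * min (int T - 1) (int K - int r) - max 0 (int T + int K - 1 - int K*int L)
       + int r * max 0 (int L - int Q - 2) + (if Q+1 < L then max 0 (int r - int \<mu>) else 0))"
proof -
  have n1: "T - 1 = K * Q + \<mu>" using Qd md by simp
  have hT: "int T - 1 = int K * int Q + int \<mu>" using n1 assms by (metis of_nat_1 of_nat_add of_nat_diff of_nat_mult One_nat_def Suc_leI)
  have mK: "\<mu> < K" using md assms by simp
  have hmu: "(int T - 1) mod int K = int \<mu>"
    using hT mK by (simp add: add.commute)
  have hQ: "(int T - 1 - int \<mu>) div int K = int Q" using hT assms by simp
  have hF: "(int T - 1) div int r = int F"
    using Fd assms by (metis of_nat_1 of_nat_diff Suc_leI One_nat_def zdiv_int)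
  have K0: "rat_of_int (int K) \<noteq> 0" using assms by simp
  have hTm: "int T - 1 - int \<mu> = int K * int Q" using hT by simp
  have hT': "int T = int K * int Q + int \<mu> + 1" using hT by simp
  define \<phi> where "\<phi> = int T - 1 - int K * int L + 2 * int K"
  define x where "x = min (int Q - (if int \<mu> = 0 then 1 else (0::int))) (int L - 3)"
  have phi: "\<phi> = int K * (int Q + 2 - int L) + int \<mu>" unfolding \<phi>_def hT' by (simp add: algebra_simps)
  have c1: "rat_of_int (int r * (int K * int Q)) / rat_of_int (int K) = of_int (int r * int Q)"
    using K0 by (simp add: field_simps)
  have c2: "rat_of_int (int K * int Q) / rat_of_int (int K) = of_int (int Q)"
    using K0 by (simp add: field_simps)
  have mm: "min 0 (int \<mu> - int r) = - max 0 (int r - int \<mu>)" by simp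
  have main: "rat_of_int
      (int K * int L + 2 * int K + 3 * int T - 2 - max (int K) \<phi> + (int L - 2) * max 0 (min (int r) (int r - \<phi>)) +
       int F * min (int T - 1) (int K - int r)) -
     ind (\<phi> < int r) *
     (rat_of_int (min 0 (int \<mu> - int r)) + of_int (int r * int Q) +
      rat_of_int (- int K * x\<^sup>2 + (- int K - 2 * max 0 \<phi> + 2 * int T - 2) * x + int T - 1 - int \<mu>) / 2 -
      of_int (int Q) * (rat_of_int (int T - 1 + int \<mu>) / 2)) =
     of_int (int K*int L + 3*int T + int K - 2
       + int F * min (int T - 1) (int K - int r) - max 0 (int T + int K - 1 - int K*int L)
       + int r * max 0 (int L - int Q - 2) + (if Q+1 < L then max 0 (int r - int \<mu>) else 0))"
  proof (cases "Q + 3 \<le> L")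
    case True
    have p: "\<phi> < 0"
    proof -
      have "int K * (int Q + 2 - int L) \<le> int K * (-1)" using True assms by (intro mult_left_mono) auto
      then show ?thesis using phi mK by simp
    qed
    have e1: "max (int K) \<phi> = int K" "max 0 (min (int r) (int r - \<phi>)) = int r" "ind (\<phi> < int r) = 1"
      "max 0 \<phi> = 0" "max 0 (int T + int K - 1 - int K*int L) = 0" "max 0 (int L - int Q - 2) = int L - int Q - 2"
      "x = int Q - (if int \<mu> = 0 then 1 else 0)"
      using p assms True unfolding \<phi>_def x_def ind_def by auto
    show ?thesis unfolding e1 using True
      by (cases "\<mu> = 0") (simp_all add: hT' field_simps power2_eq_square mm)
  next
    case False
    show ?thesis
    proof (cases "Q + 2 = L")
      case True
      have p: "\<phi> = int \<mu>" using phi True by simp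
      have e1: "max (int K) \<phi> = int K" "max 0 (min (int r) (int r - \<phi>)) = max 0 (int r - int \<mu>)"
        "max 0 \<phi> = int \<mu>" "max 0 (int L - int Q - 2) = 0"
        "x = int Q - 1" "int L = int Q + 2" "(Q + 1 < L) = True"
        using p True mK unfolding x_def by auto
      have e0: "max 0 (int T + int K - 1 - int K*int L) = 0"
      proof -
        have "int T + int K - 1 - int K*int L = \<phi> - int K" unfolding \<phi>_def by simp
        moreover have "int \<mu> < int K" using mK by simp
        ultimately show ?thesis using p by (simp add: max_def)
      qed
      show ?thesis
      proof (cases "\<mu> < r")
        case True
        have e2: "ind (\<phi> < int r) = 1" "max 0 (int r - int \<mu>) = int r - int \<mu>"
          "min 0 (int \<mu> - int r) = int \<mu> - int r" using True p unfolding ind_def by auto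
        show ?thesis unfolding e0 unfolding e1 e2 by (simp add: hT' field_simps power2_eq_square)
      next
        case False
        have e2: "ind (\<phi> < int r) = 0" "max 0 (int r - int \<mu>) = 0"
          using False p unfolding ind_def by auto
        show ?thesis unfolding e0 unfolding e1 e2 by (simp add: hT')
      qed
    next
      case False2: False
      have "int K * 1 \<le> int K * (int Q + 2 - int L)" using False False2 assms by (intro mult_left_mono) auto
      then have p: "int K \<le> \<phi>" using phi by simp
      have e1: "max (int K) \<phi> = \<phi>" "max 0 (min (int r) (int r - \<phi>)) = 0" "ind (\<phi> < int r) = 0"
        "max 0 (int T + int K - 1 - int K*int L) = \<phi> - int K" "max 0 (int L - int Q - 2) = 0"
        "(Q + 1 < L) = False"
        using p assms False False2 unfolding \<phi>_def ind_def by auto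
      show ?thesis unfolding e1 by simp
    qed
  qed
  show ?thesis
    unfolding gasp_N_def Let_def hmu hQ hF unfolding hTm \<phi>_def[symmetric] x_def[symmetric] c1 c2
    by (rule main)
qed



lemma int_diff_max: "int (a - b) = max 0 (int a - int b)"
  by (simp add: max_def of_nat_diff)

theorem theorem1:
  fixes K L T r :: nat
  assumes "0 < K" "0 < L" "0 < T" "0 < r"
    and "L \<le> K" and "r \<le> min K T"
  shows "rat_of_nat (card (sumset (gasp_alpha K L T r) (gasp_beta K L T))) = gasp_N K L T r"
proof -
  define Q where "Q = (T-1) div K"
  define \<mu> where "\<mu> = (T-1) mod K"
  define F where "F = (T-1) div r"
  define c where "c = card (sumset (gasp_alpha K L T r) (gasp_beta K L T))"
  have rK: "r \<le> K" and rT: "r \<le> T" using assms by auto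
  have mK: "\<mu> < K" using assms \<mu>_def by simp
  have n1: "T - 1 = K * Q + \<mu>" using Q_def \<mu>_def by simp
  have e: "K * Suc Q + \<mu> = T + K - 1" using n1 assms(3) by simp
  have A1: "card {x \<in> RR K L r. T+K-1 \<le> x} = r*(L - Suc (Suc Q)) + (if Suc Q < L then r - min r \<mu> else 0)"
    using card_RR_ge[OF assms(4) rK mK, of L "Suc Q"] unfolding e by simp
  have W: "card (WW K r T T) = T + (T-1) + F * min (T-1) (K-r)"
    using card_WW[OF assms(4) rK assms(3), of "T-1"] assms unfolding F_def by simp
  have cm: "c + (K*L+T+K-1 - 2*(K*L)) = (K*L+T+K-1) + (r*(L - Suc (Suc Q)) + (if Suc Q < L then r - min r \<mu> else 0))
       + (T + (T-1) + F * min (T-1) (K-r))"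
    using card_main[OF assms(1-4) rK rT] A1 W unfolding c_def by simp
  have ic: "int c = int K*int L + 3*int T + int K - 2
       + int F * min (int T - 1) (int K - int r) - max 0 (int T + int K - 1 - int K*int L)
       + int r * max 0 (int L - int Q - 2) + (if Q+1 < L then max 0 (int r - int \<mu>) else 0)"
  proof -
    have i1: "int (K*L+T+K-1 - 2*(K*L)) = max 0 (int T + int K - 1 - int K*int L)"
    proof -
      have "K*L+T+K-1 = K*L + (T-1) + K" using assms by simp
      then have "int (K*L+T+K-1 - 2*(K*L)) = int (K*L + (T-1) + K - 2*(K*L))" by simp
      also have "\<dots> = max 0 (int (K*L + (T-1) + K) - int (2*(K*L)))" by (rule int_diff_max)
      also have "\<dots> = max 0 (int T + int K - 1 - int K*int L)" using assms by (simp add: of_nat_diff)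
      finally show ?thesis .
    qed
    have i2: "int (r*(L - Suc (Suc Q))) = int r * max 0 (int L - int Q - 2)"
      by (simp add: of_nat_diff max_def)
    have i3: "int (r - min r \<mu>) = max 0 (int r - int \<mu>)" by (simp add: of_nat_diff max_def min_def)
    have i4: "int (min (T-1) (K-r)) = min (int T - 1) (int K - int r)" using rK assms(3) by (auto simp: of_nat_diff min_def)
    have i5: "int (if Suc Q < L then r - min r \<mu> else 0) = (if Q+1 < L then max 0 (int r - int \<mu>) else 0)"
      using i3 by simp
    have i6: "int (T + (T-1) + F * min (T-1) (K-r)) = 2 * int T - 1 + int F * min (int T - 1) (int K - int r)"
      using assms(3) i4 by (simp add: of_nat_diff)
    have i7: "int (K*L+T+K-1) = int K * int L + int T + int K - 1" using assms(3) by (simp add: of_nat_diff)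
    have "int c + int (K*L+T+K-1 - 2*(K*L)) = int (K*L+T+K-1) + (int (r*(L - Suc (Suc Q))) + int (if Suc Q < L then r - min r \<mu> else 0))
       + int (T + (T-1) + F * min (T-1) (K-r))" using arg_cong[OF cm, of int] by (simp only: of_nat_add)
    then show ?thesis unfolding i1 i2 i5 i6 i7 by linarith
  qed
  have "gasp_N K L T r = of_int (int c)"
    unfolding ic using N_eq[OF assms(1-4) rK rT Q_def \<mu>_def F_def] by simp
  then show ?thesis unfolding c_def by simp
qed

end
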